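(* Let $\mathcal{T}$ be a $\operatorname{Hom}$-finite Krull–Schmidt triangulated category over an algebraically closed field, and let $(\mathcal{I},\mathcal{R})$ be an ideal torsion pair in $\mathcal{T}$. Then (1) $\mathcal{I}=\mathrm{CoGh}_{\mathcal{R}}$ and $\mathcal{R}=\mathrm{Gh}_{\mathcal{I}}$; (2) $\mathcal{I}$ is contravariantly finite and $\mathcal{R}$ is covariantly finite.
   Context: Composition of $f:X\to Y$, $g:Y\to Z$ is $gf$. An ideal: subgroups $\mathcal{I}(X,Y)\subseteq\operatorname{Hom}(X,Y)$ closed under composition with arbitrary morphisms. $\mathrm{Gh}_{\mathcal{I}}=\{f: fi=0\text{ for all composable } i\in\mathcal{I}\}$, $\mathrm{CoGh}_{\mathcal{I}}=\{f: if=0\text{ for all composable } i\in\mathcal{I}\}$. A pair $(\mathcal{I},\mathcal{R})$ of ideals is an ideal torsion pair if (a) for all $i:S\to T$ in $\mathcal{I}$ and $r:U\to V$ in $\mathcal{R}$, $rgi=0$ for every $g:T\to U$; and (b) for each $T\in\mathcal{T}$ there is a triangle $X\xrightarrow{f}T\xrightarrow{g}Y\to X[1]$ with $f\in\mathcal{I}$ and $g\in\mathcal{R}$. $\mathcal{I}$ is contravariantly (resp. covariantly) finite if every object has a right (resp. left) $\mathcal{I}$-approximation, where a right $\mathcal{I}$-approximation of $T$ is $i:X\to T$ in $\mathcal{I}$ through which every morphism of $\mathcal{I}$ ending at $T$ factors, and left approximations are dual. *)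

theory Defs
  imports "HOL-Computational_Algebra.Polynomial"
begin

text \<open>Objects are all elements of type 'o, morphisms all elements of type 'm.
  Composition: for f : X -> Y and g : Y -> Z, comp C g f = gf.\<close>

record ('o,'m,'k) tcat =
  dom :: "'m \<Rightarrow> 'o"
  cod :: "'m \<Rightarrow> 'o"
  ident :: "'o \<Rightarrow> 'm"
  comp :: "'m \<Rightarrow> 'm \<Rightarrow> 'm"
  zer :: "'o \<Rightarrow> 'o \<Rightarrow> 'm"
  add :: "'m \<Rightarrow> 'm \<Rightarrow> 'm"
  neg :: "'m \<Rightarrow> 'm"
  smul :: "'k \<Rightarrow> 'm \<Rightarrow> 'm"
  shO :: "'o \<Rightarrow> 'o"
  shM :: "'m \<Rightarrow> 'm"
  dist :: "('o \<times> 'o \<times> 'o \<times> 'm \<times> 'm \<times> 'm) set"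

definition alg_closed :: "'k::field itself \<Rightarrow> bool" where
  "alg_closed _ \<longleftrightarrow> (\<forall>p :: 'k poly. degree p \<ge> 1 \<longrightarrow> (\<exists>x. poly p x = 0))"

definition hom :: "('o,'m,'k) tcat \<Rightarrow> 'o \<Rightarrow> 'o \<Rightarrow> 'm set" where
  "hom C X Y = {f. dom C f = X \<and> cod C f = Y}"

definition is_category :: "('o,'m,'k) tcat \<Rightarrow> bool" where
  "is_category C \<longleftrightarrow>
     (\<forall>X. dom C (ident C X) = X \<and> cod C (ident C X) = X) \<and>
     (\<forall>f g. cod C f = dom C g \<longrightarrow> dom C (comp C g f) = dom C f \<and> cod C (comp C g f) = cod C g) \<and>
     (\<forall>f g h. cod C f = dom C g \<and> cod C g = dom C h \<longrightarrow>
        comp C h (comp C g f) = comp C (comp C h g) f) \<and>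
     (\<forall>f. comp C f (ident C (dom C f)) = f \<and> comp C (ident C (cod C f)) f = f)"

definition parallel :: "('o,'m,'k) tcat \<Rightarrow> 'm \<Rightarrow> 'm \<Rightarrow> bool" where
  "parallel C f g \<longleftrightarrow> dom C f = dom C g \<and> cod C f = cod C g"

definition is_klinear :: "('o,'m,'k::field) tcat \<Rightarrow> bool" where
  "is_klinear C \<longleftrightarrow> is_category C \<and>
     (\<forall>X Y. dom C (zer C X Y) = X \<and> cod C (zer C X Y) = Y) \<and>
     (\<forall>f g. parallel C f g \<longrightarrow> dom C (add C f g) = dom C f \<and> cod C (add C f g) = cod C f) \<and>
     (\<forall>f. dom C (neg C f) = dom C f \<and> cod C (neg C f) = cod C f) \<and>
     (\<forall>a f. dom C (smul C a f) = dom C f \<and> cod C (smul C a f) = cod C f) \<and>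
     (\<forall>f g h. parallel C f g \<and> parallel C g h \<longrightarrow> add C (add C f g) h = add C f (add C g h)) \<and>
     (\<forall>f g. parallel C f g \<longrightarrow> add C f g = add C g f) \<and>
     (\<forall>f. add C f (zer C (dom C f) (cod C f)) = f) \<and>
     (\<forall>f. add C f (neg C f) = zer C (dom C f) (cod C f)) \<and>
     (\<forall>a f g. parallel C f g \<longrightarrow> smul C a (add C f g) = add C (smul C a f) (smul C a g)) \<and>
     (\<forall>a b f. smul C (a + b) f = add C (smul C a f) (smul C b f)) \<and>
     (\<forall>a b f. smul C (a * b) f = smul C a (smul C b f)) \<and>
     (\<forall>f. smul C 1 f = f) \<and>
     (\<forall>f g g'. cod C f = dom C g \<and> parallel C g g' \<longrightarrow>
        comp C (add C g g') f = add C (comp C g f) (comp C g' f)) \<and>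
     (\<forall>f f' g. cod C f = dom C g \<and> parallel C f f' \<longrightarrow>
        comp C g (add C f f') = add C (comp C g f) (comp C g f')) \<and>
     (\<forall>a f g. cod C f = dom C g \<longrightarrow>
        comp C (smul C a g) f = smul C a (comp C g f) \<and> comp C g (smul C a f) = smul C a (comp C g f))"

fun msum :: "('o,'m,'k) tcat \<Rightarrow> 'o \<Rightarrow> 'o \<Rightarrow> 'm list \<Rightarrow> 'm" where
  "msum C X Y [] = zer C X Y"
| "msum C X Y (f # fs) = add C f (msum C X Y fs)"

definition lincomb :: "('o,'m,'k) tcat \<Rightarrow> 'o \<Rightarrow> 'o \<Rightarrow> ('k \<times> 'm) list \<Rightarrow> 'm" where
  "lincomb C X Y cs = msum C X Y (map (\<lambda>(a,s). smul C a s) cs)"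

definition is_dsum :: "('o,'m,'k) tcat \<Rightarrow> 'o \<Rightarrow> 'o list \<Rightarrow> bool" where
  "is_dsum C B Xs \<longleftrightarrow> (\<exists>ins projs.
     length ins = length Xs \<and> length projs = length Xs \<and>
     (\<forall>k < length Xs. ins ! k \<in> hom C (Xs ! k) B \<and> projs ! k \<in> hom C B (Xs ! k)) \<and>
     (\<forall>k < length Xs. \<forall>l < length Xs.
        comp C (projs ! k) (ins ! l) = (if k = l then ident C (Xs ! k) else zer C (Xs ! l) (Xs ! k))) \<and>
     msum C B B (map (\<lambda>k. comp C (ins ! k) (projs ! k)) [0..<length Xs]) = ident C B)"

definition is_additive :: "('o,'m,'k::field) tcat \<Rightarrow> bool" where
  "is_additive C \<longleftrightarrow> is_klinear C \<and> (\<exists>Z. is_dsum C Z []) \<and> (\<forall>X Y. \<exists>B. is_dsum C B [X, Y])"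

definition is_iso :: "('o,'m,'k) tcat \<Rightarrow> 'm \<Rightarrow> bool" where
  "is_iso C f \<longleftrightarrow> (\<exists>g. g \<in> hom C (cod C f) (dom C f) \<and>
      comp C g f = ident C (dom C f) \<and> comp C f g = ident C (cod C f))"

definition isomorphic :: "('o,'m,'k) tcat \<Rightarrow> 'o \<Rightarrow> 'o \<Rightarrow> bool" where
  "isomorphic C X Y \<longleftrightarrow> (\<exists>f \<in> hom C X Y. is_iso C f)"

definition is_shift :: "('o,'m,'k::field) tcat \<Rightarrow> bool" where
  "is_shift C \<longleftrightarrow>
     (\<forall>f. dom C (shM C f) = shO C (dom C f) \<and> cod C (shM C f) = shO C (cod C f)) \<and>
     (\<forall>X. shM C (ident C X) = ident C (shO C X)) \<and>
     (\<forall>f g. cod C f = dom C g \<longrightarrow> shM C (comp C g f) = comp C (shM C g) (shM C f)) \<and>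
     (\<forall>f g. parallel C f g \<longrightarrow> shM C (add C f g) = add C (shM C f) (shM C g)) \<and>
     (\<forall>a f. shM C (smul C a f) = smul C a (shM C f)) \<and>
     (\<forall>X Y. bij_betw (shM C) (hom C X Y) (hom C (shO C X) (shO C Y))) \<and>
     (\<forall>Y. \<exists>X. isomorphic C (shO C X) Y)"

definition is_triangle :: "('o,'m,'k) tcat \<Rightarrow> ('o \<times> 'o \<times> 'o \<times> 'm \<times> 'm \<times> 'm) \<Rightarrow> bool" where
  "is_triangle C T \<longleftrightarrow> (case T of (X,Y,Z,f,g,h) \<Rightarrow>
      f \<in> hom C X Y \<and> g \<in> hom C Y Z \<and> h \<in> hom C Z (shO C X))"

definition tri_morph :: "('o,'m,'k) tcat \<Rightarrow> ('o \<times> 'o \<times> 'o \<times> 'm \<times> 'm \<times> 'm) \<Rightarrow>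
    ('o \<times> 'o \<times> 'o \<times> 'm \<times> 'm \<times> 'm) \<Rightarrow> 'm \<Rightarrow> 'm \<Rightarrow> 'm \<Rightarrow> bool" where
  "tri_morph C T T' a b c \<longleftrightarrow> (case T of (X,Y,Z,f,g,h) \<Rightarrow> case T' of (X',Y',Z',f',g',h') \<Rightarrow>
      a \<in> hom C X X' \<and> b \<in> hom C Y Y' \<and> c \<in> hom C Z Z' \<and>
      comp C b f = comp C f' a \<and> comp C c g = comp C g' b \<and> comp C (shM C a) h = comp C h' c)"

definition is_triangulated :: "('o,'m,'k::field) tcat \<Rightarrow> bool" where
  "is_triangulated C \<longleftrightarrow> is_additive C \<and> is_shift C \<and>
     (\<forall>T \<in> dist C. is_triangle C T) \<and>
     \<comment> \<open>TR1\<close>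
     (\<forall>X Z. is_dsum C Z [] \<longrightarrow>
        (X, X, Z, ident C X, zer C X Z, zer C Z (shO C X)) \<in> dist C) \<and>
     (\<forall>T T' a b c. T \<in> dist C \<and> is_triangle C T' \<and> tri_morph C T T' a b c \<and>
        is_iso C a \<and> is_iso C b \<and> is_iso C c \<longrightarrow> T' \<in> dist C) \<and>
     (\<forall>f. \<exists>Z g h. (dom C f, cod C f, Z, f, g, h) \<in> dist C) \<and>
     \<comment> \<open>TR2\<close>
     (\<forall>X Y Z f g h. (X,Y,Z,f,g,h) \<in> dist C \<longleftrightarrow>
        (Y, Z, shO C X, g, h, neg C (shM C f)) \<in> dist C) \<and>
     \<comment> \<open>TR3\<close>
     (\<forall>X Y Z f g h X' Y' Z' f' g' h' a b.
        (X,Y,Z,f,g,h) \<in> dist C \<and> (X',Y',Z',f',g',h') \<in> dist C \<and>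
        a \<in> hom C X X' \<and> b \<in> hom C Y Y' \<and> comp C b f = comp C f' a \<longrightarrow>
        (\<exists>c. tri_morph C (X,Y,Z,f,g,h) (X',Y',Z',f',g',h') a b c)) \<and>
     \<comment> \<open>TR4 (octahedral axiom)\<close>
     (\<forall>X Y Z Z' X' Y' u v j k l i m n.
        (X,Y,Z',u,j,k) \<in> dist C \<and> (Y,Z,X',v,l,i) \<in> dist C \<and>
        (X,Z,Y',comp C v u,m,n) \<in> dist C \<longrightarrow>
        (\<exists>f g. f \<in> hom C Z' Y' \<and> g \<in> hom C Y' X' \<and>
           (Z',Y',X',f,g,comp C (shM C j) i) \<in> dist C \<and>
           comp C f j = comp C m v \<and> comp C n f = k \<and>
           comp C g m = l \<and> comp C (shM C u) n = comp C i g))"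

definition hom_finite :: "('o,'m,'k::field) tcat \<Rightarrow> bool" where
  "hom_finite C \<longleftrightarrow> (\<forall>X Y. \<exists>S. finite S \<and> S \<subseteq> hom C X Y \<and>
     (\<forall>f \<in> hom C X Y. \<exists>cs. set (map snd cs) \<subseteq> S \<and> f = lincomb C X Y cs))"

definition local_end :: "('o,'m,'k) tcat \<Rightarrow> 'o \<Rightarrow> bool" where
  "local_end C X \<longleftrightarrow> ident C X \<noteq> zer C X X \<and>
     (\<forall>f \<in> hom C X X. \<forall>g \<in> hom C X X. \<not> is_iso C f \<and> \<not> is_iso C g \<longrightarrow> \<not> is_iso C (add C f g))"

definition krull_schmidt :: "('o,'m,'k) tcat \<Rightarrow> bool" where
  "krull_schmidt C \<longleftrightarrow> (\<forall>X. \<exists>Xs. (\<forall>Y \<in> set Xs. local_end C Y) \<and> is_dsum C X Xs)"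

definition is_ideal :: "('o,'m,'k) tcat \<Rightarrow> 'm set \<Rightarrow> bool" where
  "is_ideal C I \<longleftrightarrow>
     (\<forall>X Y. zer C X Y \<in> I) \<and>
     (\<forall>f \<in> I. \<forall>g \<in> I. parallel C f g \<longrightarrow> add C f g \<in> I) \<and>
     (\<forall>f \<in> I. neg C f \<in> I) \<and>
     (\<forall>f \<in> I. \<forall>g. cod C f = dom C g \<longrightarrow> comp C g f \<in> I) \<and>
     (\<forall>f \<in> I. \<forall>h. cod C h = dom C f \<longrightarrow> comp C f h \<in> I)"

definition Gh :: "('o,'m,'k) tcat \<Rightarrow> 'm set \<Rightarrow> 'm set" where
  "Gh C I = {f. \<forall>i \<in> I. cod C i = dom C f \<longrightarrow> comp C f i = zer C (dom C i) (cod C f)}"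

definition CoGh :: "('o,'m,'k) tcat \<Rightarrow> 'm set \<Rightarrow> 'm set" where
  "CoGh C I = {f. \<forall>i \<in> I. dom C i = cod C f \<longrightarrow> comp C i f = zer C (dom C f) (cod C i)}"

definition ideal_torsion_pair :: "('o,'m,'k) tcat \<Rightarrow> 'm set \<Rightarrow> 'm set \<Rightarrow> bool" where
  "ideal_torsion_pair C I R \<longleftrightarrow> is_ideal C I \<and> is_ideal C R \<and>
     (\<forall>i \<in> I. \<forall>r \<in> R. \<forall>g. g \<in> hom C (cod C i) (dom C r) \<longrightarrow>
        comp C r (comp C g i) = zer C (dom C i) (cod C r)) \<and>
     (\<forall>T. \<exists>X Y f g h. f \<in> I \<and> g \<in> R \<and> (X, T, Y, f, g, h) \<in> dist C)"

definition right_approx :: "('o,'m,'k) tcat \<Rightarrow> 'm set \<Rightarrow> 'o \<Rightarrow> 'm \<Rightarrow> bool" where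
  "right_approx C I T i \<longleftrightarrow> i \<in> I \<and> cod C i = T \<and>
     (\<forall>j \<in> I. cod C j = T \<longrightarrow> (\<exists>u \<in> hom C (dom C j) (dom C i). comp C i u = j))"

definition left_approx :: "('o,'m,'k) tcat \<Rightarrow> 'm set \<Rightarrow> 'o \<Rightarrow> 'm \<Rightarrow> bool" where
  "left_approx C I T i \<longleftrightarrow> i \<in> I \<and> dom C i = T \<and>
     (\<forall>j \<in> I. dom C j = T \<longrightarrow> (\<exists>u \<in> hom C (cod C i) (cod C j). comp C u i = j))"

definition contravariantly_finite :: "('o,'m,'k) tcat \<Rightarrow> 'm set \<Rightarrow> bool" where
  "contravariantly_finite C I \<longleftrightarrow> (\<forall>T. \<exists>i. right_approx C I T i)"

definition covariantly_finite :: "('o,'m,'k) tcat \<Rightarrow> 'm set \<Rightarrow> bool" where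
  "covariantly_finite C I \<longleftrightarrow> (\<forall>T. \<exists>i. left_approx C I T i)"

end

theory Submission
  imports Defs
begin

lemma kl_facts:
  assumes "is_klinear C"
  shows "dom C (zer C X Y) = X" "cod C (zer C X Y) = Y"
    "parallel C f g \<Longrightarrow> dom C (add C f g) = dom C f"
    "parallel C f g \<Longrightarrow> cod C (add C f g) = cod C f"
    "dom C (neg C f) = dom C f" "cod C (neg C f) = cod C f"
    "parallel C f g \<Longrightarrow> parallel C g h \<Longrightarrow> add C (add C f g) h = add C f (add C g h)"
    "parallel C f g \<Longrightarrow> add C f g = add C g f"
    "add C f (zer C (dom C f) (cod C f)) = f"
    "add C f (neg C f) = zer C (dom C f) (cod C f)"
    "cod C f = dom C g \<Longrightarrow> parallel C g g' \<Longrightarrow>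
        comp C (add C g g') f = add C (comp C g f) (comp C g' f)"
    "cod C f = dom C g \<Longrightarrow> parallel C f f' \<Longrightarrow>
        comp C g (add C f f') = add C (comp C g f) (comp C g f')"
    "cod C f = dom C g \<Longrightarrow> dom C (comp C g f) = dom C f"
    "cod C f = dom C g \<Longrightarrow> cod C (comp C g f) = cod C g"
    "comp C f (ident C (dom C f)) = f" "comp C (ident C (cod C f)) f = f"
    "dom C (ident C X) = X" "cod C (ident C X) = X"
proof -
  note H = assms[unfolded is_klinear_def is_category_def]
  have X7: "\<forall>f g h. parallel C f g \<and> parallel C g h \<longrightarrow> add C (add C f g) h = add C f (add C g h)"
    using assms unfolding is_klinear_def by (elim conjE) assumption
  have X8: "\<forall>f g. parallel C f g \<longrightarrow> add C f g = add C g f"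
    using assms unfolding is_klinear_def by (elim conjE) assumption
  have X11: "\<forall>f g g'. cod C f = dom C g \<and> parallel C g g' \<longrightarrow>
        comp C (add C g g') f = add C (comp C g f) (comp C g' f)"
    using assms unfolding is_klinear_def by (elim conjE) assumption
  have X12: "\<forall>f f' g. cod C f = dom C g \<and> parallel C f f' \<longrightarrow>
        comp C g (add C f f') = add C (comp C g f) (comp C g f')"
    using assms unfolding is_klinear_def by (elim conjE) assumption
  show "dom C (zer C X Y) = X" "cod C (zer C X Y) = Y" using H by simp_all
  show "parallel C f g \<Longrightarrow> dom C (add C f g) = dom C f" "parallel C f g \<Longrightarrow> cod C (add C f g) = cod C f"
    using H by simp_all
  show "dom C (neg C f) = dom C f" "cod C (neg C f) = cod C f" using H by simp_all
  show "parallel C f g \<Longrightarrow> parallel C g h \<Longrightarrow> add C (add C f g) h = add C f (add C g h)"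
    using X7 by blast
  show "parallel C f g \<Longrightarrow> add C f g = add C g f" using X8 by blast
  show "add C f (zer C (dom C f) (cod C f)) = f" "add C f (neg C f) = zer C (dom C f) (cod C f)"
    using H by simp_all
  show "cod C f = dom C g \<Longrightarrow> parallel C g g' \<Longrightarrow>
        comp C (add C g g') f = add C (comp C g f) (comp C g' f)" using X11 by blast
  show "cod C f = dom C g \<Longrightarrow> parallel C f f' \<Longrightarrow>
        comp C g (add C f f') = add C (comp C g f) (comp C g f')" using X12 by blast
  show "cod C f = dom C g \<Longrightarrow> dom C (comp C g f) = dom C f"
    "cod C f = dom C g \<Longrightarrow> cod C (comp C g f) = cod C g" using H by simp_all
  show "comp C f (ident C (dom C f)) = f" "comp C (ident C (cod C f)) f = f"
    "dom C (ident C X) = X" "cod C (ident C X) = X" using H by simp_all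
qed

lemma idem_zero:
  assumes k: "is_klinear C" and e: "add C y y = y"
  shows "y = zer C (dom C y) (cod C y)"
proof -
  have p: "parallel C y y" "parallel C y (neg C y)"
    by (auto simp: parallel_def kl_facts[OF k])
  have "zer C (dom C y) (cod C y) = add C (add C y y) (neg C y)"
    using e kl_facts(10)[OF k] by simp
  also have "\<dots> = add C y (add C y (neg C y))"
    using kl_facts(7)[OF k p] .
  also have "\<dots> = y" using kl_facts(9,10)[OF k] by simp
  finally show ?thesis by simp
qed

lemma comp_zer_right:
  assumes k: "is_klinear C" and "dom C g = Y"
  shows "comp C g (zer C X Y) = zer C X (cod C g)"
proof -
  let ?z = "zer C X Y" let ?w = "comp C g ?z"
  have zz: "add C ?z ?z = ?z" using kl_facts(9)[OF k, of ?z] kl_facts(1,2)[OF k] by simp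
  have "?w = add C ?w ?w"
    using kl_facts(12)[OF k, of ?z g ?z] zz assms kl_facts(1,2)[OF k] by (simp add: parallel_def)
  then have "?w = zer C (dom C ?w) (cod C ?w)" using idem_zero[OF k] by metis
  then show ?thesis using assms kl_facts(1,2,13,14)[OF k] by simp
qed

lemma comp_zer_left:
  assumes k: "is_klinear C" and "cod C f = Y"
  shows "comp C (zer C Y Z) f = zer C (dom C f) Z"
proof -
  let ?z = "zer C Y Z" let ?w = "comp C ?z f"
  have zz: "add C ?z ?z = ?z" using kl_facts(9)[OF k, of ?z] kl_facts(1,2)[OF k] by simp
  have "?w = add C ?w ?w"
    using kl_facts(11)[OF k, of f ?z ?z] zz assms kl_facts(1,2)[OF k] by (simp add: parallel_def)
  then have "?w = zer C (dom C ?w) (cod C ?w)" using idem_zero[OF k] by metis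
  then show ?thesis using assms kl_facts(1,2,13,14)[OF k] by simp
qed

lemma neg_unique:
  assumes k: "is_klinear C" and p: "parallel C a b" and s: "add C a b = zer C (dom C a) (cod C a)"
  shows "b = neg C a"
proof -
  have p1: "parallel C (neg C a) a" using k p by (simp add: parallel_def kl_facts)
  have "neg C a = add C (neg C a) (add C a b)"
    using s kl_facts(9)[OF k, of "neg C a"] kl_facts(5,6)[OF k] by simp
  also have "\<dots> = add C (add C (neg C a) a) b"
    using kl_facts(7)[OF k p1 p] by simp
  also have "add C (neg C a) a = zer C (dom C b) (cod C b)"
    using kl_facts(8)[OF k p1] kl_facts(10)[OF k] p by (simp add: parallel_def)
  also have "add C (zer C (dom C b) (cod C b)) b = b"
    using kl_facts(8)[OF k, of b "zer C (dom C b) (cod C b)"] kl_facts(1,2,9)[OF k]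
    by (simp add: parallel_def)
  finally show ?thesis by simp
qed

lemma neg_neg:
  assumes k: "is_klinear C" shows "neg C (neg C a) = a"
proof -
  have p: "parallel C (neg C a) a" using k by (simp add: parallel_def kl_facts)
  have "add C (neg C a) a = zer C (dom C (neg C a)) (cod C (neg C a))"
    using kl_facts(8)[OF k p] kl_facts(10)[OF k] kl_facts(5,6)[OF k] by simp
  then show ?thesis using neg_unique[OF k p] by simp
qed

lemma neg_zer:
  assumes k: "is_klinear C" shows "neg C (zer C X Y) = zer C X Y"
proof -
  have p: "parallel C (zer C X Y) (zer C X Y)" by (simp add: parallel_def)
  have "add C (zer C X Y) (zer C X Y) = zer C (dom C (zer C X Y)) (cod C (zer C X Y))"
    using kl_facts(9)[OF k, of "zer C X Y"] kl_facts(1,2)[OF k] by simp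
  then show ?thesis using neg_unique[OF k p] by simp
qed

lemma comp_neg_right:
  assumes k: "is_klinear C" and c: "cod C f = dom C g"
  shows "comp C g (neg C f) = neg C (comp C g f)"
proof -
  have p: "parallel C f (neg C f)" using k by (simp add: parallel_def kl_facts)
  have "add C (comp C g f) (comp C g (neg C f)) = comp C g (add C f (neg C f))"
    using kl_facts(12)[OF k c p] by simp
  also have "\<dots> = zer C (dom C f) (cod C g)"
    using kl_facts(10)[OF k] comp_zer_right[OF k] c by simp
  finally have e: "add C (comp C g f) (comp C g (neg C f)) = zer C (dom C (comp C g f)) (cod C (comp C g f))"
    using kl_facts(13,14)[OF k c] by simp
  have "parallel C (comp C g f) (comp C g (neg C f))"
    using c kl_facts(5,6,13,14)[OF k] by (simp add: parallel_def)
  then show ?thesis using neg_unique[OF k _ e] by simp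
qed

lemma comp_neg_left:
  assumes k: "is_klinear C" and c: "cod C f = dom C g"
  shows "comp C (neg C g) f = neg C (comp C g f)"
proof -
  have p: "parallel C g (neg C g)" using k by (simp add: parallel_def kl_facts)
  have "add C (comp C g f) (comp C (neg C g) f) = comp C (add C g (neg C g)) f"
    using kl_facts(11)[OF k c p] by simp
  also have "\<dots> = zer C (dom C f) (cod C g)"
    using kl_facts(10)[OF k] comp_zer_left[OF k] c by simp
  finally have e: "add C (comp C g f) (comp C (neg C g) f) = zer C (dom C (comp C g f)) (cod C (comp C g f))"
    using kl_facts(13,14)[OF k c] by simp
  have "parallel C (comp C g f) (comp C (neg C g) f)"
    using c kl_facts(5,6,13,14)[OF k] by (simp add: parallel_def)
  then show ?thesis using neg_unique[OF k _ e] by simp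
qed

lemma tr_facts_1:
  assumes "is_triangulated C"
  shows "is_klinear C"
  using assms unfolding is_triangulated_def is_additive_def is_shift_def
  by (elim conjE) assumption

lemma tr_facts_2:
  assumes "is_triangulated C"
  shows "\<exists>Z. is_dsum C Z []"
  using assms unfolding is_triangulated_def is_additive_def is_shift_def
  by (elim conjE) assumption

lemma tr_facts_3:
  assumes "is_triangulated C"
  shows "\<forall>f. dom C (shM C f) = shO C (dom C f) \<and> cod C (shM C f) = shO C (cod C f)"
  using assms unfolding is_triangulated_def is_additive_def is_shift_def
  by (elim conjE) assumption

lemma tr_facts_4:
  assumes "is_triangulated C"
  shows "\<forall>X. shM C (ident C X) = ident C (shO C X)"
  using assms unfolding is_triangulated_def is_additive_def is_shift_def
  by (elim conjE) assumption

lemma tr_facts_5: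
  assumes "is_triangulated C"
  shows "\<forall>f g. cod C f = dom C g \<longrightarrow> shM C (comp C g f) = comp C (shM C g) (shM C f)"
  using assms unfolding is_triangulated_def is_additive_def is_shift_def
  by (elim conjE) assumption

lemma tr_facts_6:
  assumes "is_triangulated C"
  shows "\<forall>f g. parallel C f g \<longrightarrow> shM C (add C f g) = add C (shM C f) (shM C g)"
  using assms unfolding is_triangulated_def is_additive_def is_shift_def
  by (elim conjE) assumption

lemma tr_facts_7:
  assumes "is_triangulated C"
  shows "\<forall>X Y. bij_betw (shM C) (hom C X Y) (hom C (shO C X) (shO C Y))"
  using assms unfolding is_triangulated_def is_additive_def is_shift_def
  by (elim conjE) assumption

lemma tr_facts_8:
  assumes "is_triangulated C"
  shows "\<forall>T \<in> dist C. is_triangle C T"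
  using assms unfolding is_triangulated_def is_additive_def is_shift_def
  by (elim conjE) assumption

lemma tr_facts_9:
  assumes "is_triangulated C"
  shows "\<forall>X Z. is_dsum C Z [] \<longrightarrow> (X, X, Z, ident C X, zer C X Z, zer C Z (shO C X)) \<in> dist C"
  using assms unfolding is_triangulated_def is_additive_def is_shift_def
  by (elim conjE) assumption

lemma tr_facts_10:
  assumes "is_triangulated C"
  shows "\<forall>X Y Z f g h. (X,Y,Z,f,g,h) \<in> dist C \<longleftrightarrow>
        (Y, Z, shO C X, g, h, neg C (shM C f)) \<in> dist C"
  using assms unfolding is_triangulated_def is_additive_def is_shift_def
  by (elim conjE) assumption

lemma tr_facts_11:
  assumes "is_triangulated C"
  shows "\<forall>X Y Z f g h X' Y' Z' f' g' h' a b.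
        (X,Y,Z,f,g,h) \<in> dist C \<and> (X',Y',Z',f',g',h') \<in> dist C \<and>
        a \<in> hom C X X' \<and> b \<in> hom C Y Y' \<and> comp C b f = comp C f' a \<longrightarrow>
        (\<exists>c. tri_morph C (X,Y,Z,f,g,h) (X',Y',Z',f',g',h') a b c)"
  using assms unfolding is_triangulated_def is_additive_def is_shift_def
  by (elim conjE) assumption

lemmas tr_facts = tr_facts_1 tr_facts_2 tr_facts_3 tr_facts_4 tr_facts_5 tr_facts_6 tr_facts_7 tr_facts_8 tr_facts_9 tr_facts_10 tr_facts_11

lemma shM_zer:
  assumes t: "is_triangulated C" shows "shM C (zer C X Y) = zer C (shO C X) (shO C Y)"
proof -
  note k = tr_facts(1)[OF t]
  let ?z = "zer C X Y"
  have zz: "add C ?z ?z = ?z" using kl_facts(9)[OF k, of ?z] kl_facts(1,2)[OF k] by simp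
  have "shM C ?z = add C (shM C ?z) (shM C ?z)"
    using tr_facts(6)[OF t] zz by (metis parallel_def)
  then have "shM C ?z = zer C (dom C (shM C ?z)) (cod C (shM C ?z))" using idem_zero[OF k] by metis
  then show ?thesis using tr_facts(3)[OF t] kl_facts(1,2)[OF k] by simp
qed

lemma dsum_nil: "is_dsum C Z [] \<longleftrightarrow> zer C Z Z = ident C Z"
  unfolding is_dsum_def by auto

lemma fact_left:
  assumes t: "is_triangulated C" and d: "(X,T,Y,f,g,h) \<in> dist C"
    and j: "cod C j = T" and gj: "comp C g j = zer C (dom C j) Y"
  shows "\<exists>u \<in> hom C (dom C j) X. comp C f u = j"
proof -
  note k = tr_facts(1)[OF t]
  let ?S = "dom C j"
  obtain Z where Z: "is_dsum C Z []" using tr_facts(2)[OF t] by blast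
  have tr: "f \<in> hom C X T" "g \<in> hom C T Y" "h \<in> hom C Y (shO C X)"
    using tr_facts(8)[OF t] d unfolding is_triangle_def by auto
  have d1: "(?S, ?S, Z, ident C ?S, zer C ?S Z, zer C Z (shO C ?S)) \<in> dist C"
    using tr_facts(9)[OF t] Z by blast
  have d1': "(?S, Z, shO C ?S, zer C ?S Z, zer C Z (shO C ?S), neg C (ident C (shO C ?S))) \<in> dist C"
    using tr_facts(10)[OF t] d1 tr_facts(4)[OF t] by metis
  have d2: "(T, Y, shO C X, g, h, neg C (shM C f)) \<in> dist C"
    using tr_facts(10)[OF t] d by blast
  have a: "j \<in> hom C ?S T" using j by (simp add: hom_def)
  have b: "zer C Z Y \<in> hom C Z Y" using kl_facts(1,2)[OF k] by (simp add: hom_def)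
  have sq: "comp C (zer C Z Y) (zer C ?S Z) = comp C g j"
    using comp_zer_left[OF k] kl_facts(1,2)[OF k] gj by simp
  obtain c where c: "tri_morph C (?S, Z, shO C ?S, zer C ?S Z, zer C Z (shO C ?S), neg C (ident C (shO C ?S)))
      (T, Y, shO C X, g, h, neg C (shM C f)) j (zer C Z Y) c"
    using tr_facts(11)[OF t] d1' d2 a b sq by blast
  then have ch: "c \<in> hom C (shO C ?S) (shO C X)"
    and ce: "comp C (shM C j) (neg C (ident C (shO C ?S))) = comp C (neg C (shM C f)) c"
    unfolding tri_morph_def by auto
  have sj: "dom C (shM C j) = shO C ?S" "cod C (shM C f) = shO C T" "dom C (shM C f) = shO C X"
    using tr_facts(3)[OF t] tr by (auto simp: hom_def)
  have "comp C (shM C j) (neg C (ident C (shO C ?S))) = neg C (shM C j)"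
    using comp_neg_right[OF k] kl_facts(15,18)[OF k] sj by metis
  moreover have "comp C (neg C (shM C f)) c = neg C (comp C (shM C f) c)"
    using comp_neg_left[OF k] ch sj by (simp add: hom_def)
  ultimately have e: "shM C j = comp C (shM C f) c" using ce neg_neg[OF k] by metis
  have bj: "bij_betw (shM C) (hom C ?S X) (hom C (shO C ?S) (shO C X))" using tr_facts(7)[OF t] by blast
  then obtain u where u: "u \<in> hom C ?S X" "c = shM C u" using ch unfolding bij_betw_def by blast
  have "shM C (comp C f u) = comp C (shM C f) (shM C u)"
    using tr_facts(5)[OF t] u tr by (simp add: hom_def)
  then have e2: "shM C j = shM C (comp C f u)" using e u by simp
  have "comp C f u \<in> hom C ?S T" using u tr kl_facts(13,14)[OF k] by (simp add: hom_def)
  moreover have "bij_betw (shM C) (hom C ?S T) (hom C (shO C ?S) (shO C T))" using tr_facts(7)[OF t] by blast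
  ultimately have "j = comp C f u" using e2 a unfolding bij_betw_def inj_on_def by blast
  then show ?thesis using u by blast
qed

lemma fact_right:
  assumes t: "is_triangulated C" and d: "(X,T,Y,f,g,h) \<in> dist C"
    and p: "dom C p = T" and pf: "comp C p f = zer C X (cod C p)"
  shows "\<exists>v \<in> hom C Y (cod C p). comp C v g = p"
proof -
  note k = tr_facts(1)[OF t]
  let ?S = "cod C p"
  obtain Z where Z: "is_dsum C Z []" using tr_facts(2)[OF t] by blast
  have tr: "f \<in> hom C X T" "g \<in> hom C T Y" "h \<in> hom C Y (shO C X)"
    using tr_facts(8)[OF t] d unfolding is_triangle_def by auto
  have "ident C (shO C Z) = zer C (shO C Z) (shO C Z)"
    using Z dsum_nil tr_facts(4)[OF t] shM_zer[OF t] by metis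
  then have Z1: "is_dsum C (shO C Z) []" using dsum_nil by metis
  have d1: "(?S, ?S, shO C Z, ident C ?S, zer C ?S (shO C Z), zer C (shO C Z) (shO C ?S)) \<in> dist C"
    using tr_facts(9)[OF t] Z1 by blast
  have "neg C (shM C (zer C Z ?S)) = zer C (shO C Z) (shO C ?S)"
    using shM_zer[OF t] neg_zer[OF k] by metis
  then have d1': "(Z, ?S, ?S, zer C Z ?S, ident C ?S, zer C ?S (shO C Z)) \<in> dist C"
    using tr_facts(10)[OF t] d1 by metis
  have a: "zer C X Z \<in> hom C X Z" using kl_facts(1,2)[OF k] by (simp add: hom_def)
  have b: "p \<in> hom C T ?S" using p by (simp add: hom_def)
  have sq: "comp C p f = comp C (zer C Z ?S) (zer C X Z)"
    using comp_zer_left[OF k] kl_facts(1,2)[OF k] pf by simp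
  obtain c where c: "tri_morph C (X,T,Y,f,g,h) (Z, ?S, ?S, zer C Z ?S, ident C ?S, zer C ?S (shO C Z))
      (zer C X Z) p c"
    using tr_facts(11)[OF t] d d1' a b sq by blast
  then have "c \<in> hom C Y ?S" "comp C c g = comp C (ident C ?S) p"
    unfolding tri_morph_def by auto
  then show ?thesis using kl_facts(16)[OF k, of p] by auto
qed

theorem proposition2p5:
  fixes C :: "('o, 'm, 'k::field) tcat" and I R :: "'m set"
  assumes "alg_closed TYPE('k)"
    and t: "is_triangulated C"
    and "hom_finite C"
    and "krull_schmidt C"
    and p: "ideal_torsion_pair C I R"
  shows "(I = CoGh C R \<and> R = Gh C I) \<and> contravariantly_finite C I \<and> covariantly_finite C R"
proof -
  note k = tr_facts(1)[OF t]
  have iI: "is_ideal C I" and iR: "is_ideal C R"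
    and orth: "\<And>i r g. i \<in> I \<Longrightarrow> r \<in> R \<Longrightarrow> g \<in> hom C (cod C i) (dom C r) \<Longrightarrow>
        comp C r (comp C g i) = zer C (dom C i) (cod C r)"
    and ex: "\<And>T. \<exists>X Y f g h. f \<in> I \<and> g \<in> R \<and> (X, T, Y, f, g, h) \<in> dist C"
    using p unfolding ideal_torsion_pair_def by blast+
  have orth2: "comp C r i = zer C (dom C i) (cod C r)" if "i \<in> I" "r \<in> R" "cod C i = dom C r" for i r
    using orth[OF that(1,2), of "ident C (cod C i)"] that kl_facts(16)[OF k, where f=i] kl_facts(17,18)[OF k]
    by (simp add: hom_def)
  have trd: "f \<in> hom C X T \<and> g \<in> hom C T Y" if "(X, T, Y, f, g, h) \<in> dist C" for X T Y f g h
    using tr_facts(8)[OF t] that unfolding is_triangle_def by auto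
  have A: "I \<subseteq> CoGh C R" using orth2 unfolding CoGh_def by auto
  have B: "CoGh C R \<subseteq> I"
  proof
    fix q assume q: "q \<in> CoGh C R"
    obtain X Y f g h where fg: "f \<in> I" "g \<in> R" "(X, cod C q, Y, f, g, h) \<in> dist C" using ex by blast
    have "comp C g q = zer C (dom C q) Y" using q fg trd[OF fg(3)] unfolding CoGh_def hom_def by auto
    then obtain u where u: "u \<in> hom C (dom C q) X" "comp C f u = q"
      using fact_left[OF t fg(3)] by blast
    show "q \<in> I" using iI fg(1) u trd[OF fg(3)] unfolding is_ideal_def hom_def by auto
  qed
  have A2: "R \<subseteq> Gh C I" using orth2 unfolding Gh_def by auto
  have B2: "Gh C I \<subseteq> R"
  proof
    fix q assume q: "q \<in> Gh C I"
    obtain X Y f g h where fg: "f \<in> I" "g \<in> R" "(X, dom C q, Y, f, g, h) \<in> dist C" using ex by blast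
    have "comp C q f = zer C X (cod C q)" using q fg trd[OF fg(3)] unfolding Gh_def hom_def by auto
    then obtain v where v: "v \<in> hom C Y (cod C q)" "comp C v g = q"
      using fact_right[OF t fg(3)] by blast
    show "q \<in> R" using iR fg(2) v trd[OF fg(3)] unfolding is_ideal_def hom_def by auto
  qed
  have CF: "contravariantly_finite C I"
    unfolding contravariantly_finite_def
  proof
    fix T
    obtain X Y f g h where fg: "f \<in> I" "g \<in> R" "(X, T, Y, f, g, h) \<in> dist C" using ex by blast
    have "right_approx C I T f"
      unfolding right_approx_def
    proof (intro conjI ballI impI)
      show "f \<in> I" by fact
      show "cod C f = T" using trd[OF fg(3)] by (simp add: hom_def)
      fix j assume j: "j \<in> I" "cod C j = T"
      have "comp C g j = zer C (dom C j) Y"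
        using orth2[OF j(1) fg(2)] j trd[OF fg(3)] by (simp add: hom_def)
      then obtain u where "u \<in> hom C (dom C j) X" "comp C f u = j"
        using fact_left[OF t fg(3) j(2)] by blast
      then show "\<exists>u\<in>hom C (dom C j) (dom C f). comp C f u = j"
        using trd[OF fg(3)] by (auto simp: hom_def)
    qed
    then show "\<exists>i. right_approx C I T i" by blast
  qed
  have CoF: "covariantly_finite C R"
    unfolding covariantly_finite_def
  proof
    fix T
    obtain X Y f g h where fg: "f \<in> I" "g \<in> R" "(X, T, Y, f, g, h) \<in> dist C" using ex by blast
    have "left_approx C R T g"
      unfolding left_approx_def
    proof (intro conjI ballI impI)
      show "g \<in> R" by fact
      show "dom C g = T" using trd[OF fg(3)] by (simp add: hom_def)
      fix j assume j: "j \<in> R" "dom C j = T"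
      have "comp C j f = zer C X (cod C j)"
        using orth2[OF fg(1) j(1)] j trd[OF fg(3)] by (simp add: hom_def)
      then obtain v where "v \<in> hom C Y (cod C j)" "comp C v g = j"
        using fact_right[OF t fg(3) j(2)] by blast
      then show "\<exists>u\<in>hom C (cod C g) (cod C j). comp C u g = j"
        using trd[OF fg(3)] by (auto simp: hom_def)
    qed
    then show "\<exists>i. left_approx C R T i" by blast
  qed
  show ?thesis using A B A2 B2 CF CoF by blast
qed

end
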